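(* Under the interleaved updating scheme with updates $\pi^i_{k,j+1}\in\arg\max_{\hat\pi^i}F_{k,i,j}(\hat\pi^i)$ (maximum assumed attained), the sequence $\{J(\pi_k)\}_{k\ge0}$ converges to some limit $\bar J\in\mathbb R$; the set of limit points of the sequence of joint policies $\{\pi_k\}_{k\ge0}$ is nonempty; and for every subsequence with $\pi_{k_j}\to\bar\pi$ one has $J(\bar\pi)=\bar J$.
   Context: Cooperative Markov game $\langle \mathcal N,\mathcal S,\mathcal A,r,P,d\rangle$ with agents $\mathcal N=[n]=\{1,\dots,n\}$, finite state space $\mathcal S$, finite per-agent action spaces $\mathcal A^i$, joint action space $\mathcal A=\prod_i\mathcal A^i$, joint reward $r:\mathcal S\times\mathcal A\to\mathbb R$ bounded by $|r|\le R_{\max}$, transition kernel $P(\cdot\mid s,a)$, initial distribution $d$, discount $\gamma\in[0,1)$. A policy of agent $i$ is a map $\pi^i(\cdot\mid s)\in\Delta(\mathcal A^i)$ (viewed as a point of the finite-dimensional product of simplices, with the Euclidean topology); a joint policy $\pi=(\pi^i)_i$ acts by $\pi(a\mid s)=\prod_i\pi^i(a^i\mid s)$; write $a=(a^{-i},a^i)$, $\pi^{-i}=(\pi^r)_{r\ne i}$. Return: $J(\pi)=\mathbb E_\pi[\sum_{t\ge0}\gamma^t r(s_t,a_t)]$ with $s_0\sim d$, $a_t\sim\pi(\cdot\mid s_t)$, $s_{t+1}\sim P(\cdot\mid s_t,a_t)$. Value $V_\pi(s)$ and action value $Q_\pi(s,a)$ are the expected discounted returns conditioned on $s_0=s$ (resp.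 $s_0=s,a_0=a$); joint advantage $A_\pi(s,a)=Q_\pi(s,a)-V_\pi(s)$. Single-agent advantage: $Q^i_\pi(s,a^i)=\mathbb E_{a^{-i}\sim\pi^{-i}(\cdot\mid s)}[Q_\pi(s,(a^{-i},a^i))]$, $A^i_\pi(s,a^i)=Q^i_\pi(s,a^i)-V_\pi(s)$. Discounted state visitation: $\rho_\pi(s)=\sum_{t\ge0}\gamma^t\Pr_\pi(s_t=s)$. Interleaved scheme: rounds $k=0,1,2,\dots$; $\pi_k=(\pi^i_k)_i$ is the joint policy at the start of round $k$ ($\pi_0$ arbitrary). Within round $k$ agents are processed in order $i=1,\dots,n$; agent $i$ performs $K_i\ge1$ micro-steps $j=0,\dots,K_i-1$ producing iterates $\pi^i_{k,0}=\pi^i_k,\pi^i_{k,1},\dots,\pi^i_{k,K_i}$, and then $\pi^i_{k+1}:=\pi^i_{k,K_i}$. Complement policy: $\tau^{-i}_k:=(\{\pi^r_{k+1}\}_{r<i},\{\pi^r_k\}_{r>i})$; baseline joint policy $\Pi_{k,i,j}:=(\tau^{-i}_k,\pi^i_{k,j})$. Surrogate: for a policy $\hat\pi^i$ of agent $i$, $L^i_{\Pi_{k,i,j}}(\tau^{-i}_k,\hat\pi^i):=\sum_{s}\rho_{\Pi_{k,i,j}}(s)\sum_{a^i}\hat\pi^i(a^i\mid s)\,A^i_{\Pi_{k,i,j}}(s,a^i)$. Constants: $\varepsilon_{k,i,j}=\max_{s,a}|A_{\Pi_{k,i,j}}(s,a)|$, $C_{k,i,j}=\frac{4\gamma\varepsilon_{k,i,j}}{(1-\gamma)^2}$.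 Max conditional KL: $D^{\max}_{\mathrm{KL}}(\mu,\nu)=\sup_s\mathrm{KL}(\mu(\cdot\mid s)\,\|\,\nu(\cdot\mid s))$. Micro-step objective: $F_{k,i,j}(\hat\pi^i):=L^i_{\Pi_{k,i,j}}(\tau^{-i}_k,\hat\pi^i)-C_{k,i,j}\,D^{\max}_{\mathrm{KL}}(\pi^i_{k,j},\hat\pi^i)$. *)

theory Defs
  imports Complex_Main "HOL-Library.FuncSet" "HOL-Library.Extended_Real"
begin

text \<open>Agents are 0,...,n-1 (processed in this order).
  A per-agent policy is a function p :: 's => 'a => real (p s a = probability of a in state s);
  a joint policy is pi :: nat => 's => 'a => real (only components i < n matter).\<close>

definition JA :: "nat \<Rightarrow> (nat \<Rightarrow> 'a set) \<Rightarrow> (nat \<Rightarrow> 'a) set" where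
  "JA n A = PiE {..<n} A"

definition valid_agent_pol :: "(nat \<Rightarrow> 'a set) \<Rightarrow> nat \<Rightarrow> ('s \<Rightarrow> 'a \<Rightarrow> real) \<Rightarrow> bool" where
  "valid_agent_pol A i p \<longleftrightarrow> (\<forall>s. (\<forall>a\<in>A i. 0 \<le> p s a) \<and> (\<Sum>a\<in>A i. p s a) = 1)"

definition jprob :: "nat \<Rightarrow> (nat \<Rightarrow> 's \<Rightarrow> 'a \<Rightarrow> real) \<Rightarrow> 's \<Rightarrow> (nat \<Rightarrow> 'a) \<Rightarrow> real" where
  "jprob n \<pi> s a = (\<Prod>i<n. \<pi> i s (a i))"

definition Ppol :: "nat \<Rightarrow> (nat \<Rightarrow> 'a set) \<Rightarrow> ('s \<Rightarrow> (nat \<Rightarrow> 'a) \<Rightarrow> 's \<Rightarrow> real)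
    \<Rightarrow> (nat \<Rightarrow> 's \<Rightarrow> 'a \<Rightarrow> real) \<Rightarrow> 's \<Rightarrow> 's \<Rightarrow> real" where
  "Ppol n A P \<pi> s s' = (\<Sum>a\<in>JA n A. jprob n \<pi> s a * P s a s')"

definition rpol :: "nat \<Rightarrow> (nat \<Rightarrow> 'a set) \<Rightarrow> ('s \<Rightarrow> (nat \<Rightarrow> 'a) \<Rightarrow> real)
    \<Rightarrow> (nat \<Rightarrow> 's \<Rightarrow> 'a \<Rightarrow> real) \<Rightarrow> 's \<Rightarrow> real" where
  "rpol n A r \<pi> s = (\<Sum>a\<in>JA n A. jprob n \<pi> s a * r s a)"

primrec sdist :: "('s::finite \<Rightarrow> 's \<Rightarrow> real) \<Rightarrow> ('s \<Rightarrow> real) \<Rightarrow> nat \<Rightarrow> 's \<Rightarrow> real" where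
  "sdist K \<mu> 0 = \<mu>"
| "sdist K \<mu> (Suc t) = (\<lambda>s'. \<Sum>s\<in>UNIV. sdist K \<mu> t s * K s s')"

definition ret :: "nat \<Rightarrow> (nat \<Rightarrow> 'a set) \<Rightarrow> ('s::finite \<Rightarrow> (nat \<Rightarrow> 'a) \<Rightarrow> 's \<Rightarrow> real)
    \<Rightarrow> ('s \<Rightarrow> (nat \<Rightarrow> 'a) \<Rightarrow> real) \<Rightarrow> real \<Rightarrow> (nat \<Rightarrow> 's \<Rightarrow> 'a \<Rightarrow> real) \<Rightarrow> ('s \<Rightarrow> real) \<Rightarrow> real" where
  "ret n A P r \<gamma> \<pi> \<mu> =
     (\<Sum>t. \<gamma> ^ t * (\<Sum>s\<in>UNIV. sdist (Ppol n A P \<pi>) \<mu> t s * rpol n A r \<pi> s))"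

definition Jret where
  "Jret n A P r \<gamma> d \<pi> = ret n A P r \<gamma> \<pi> d"

definition Vfun where
  "Vfun n A P r \<gamma> \<pi> s = ret n A P r \<gamma> \<pi> (\<lambda>s'. if s' = s then 1 else 0)"

text \<open>Q(s,a) = r(s,a) + E[sum_{t>=1} gamma^t r(s_t,a_t)] where s_1 ~ P(.|s,a)\<close>
definition Qfun where
  "Qfun n A P r \<gamma> \<pi> s a = r s a + \<gamma> * ret n A P r \<gamma> \<pi> (P s a)"

definition Advfun where
  "Advfun n A P r \<gamma> \<pi> s a = Qfun n A P r \<gamma> \<pi> s a - Vfun n A P r \<gamma> \<pi> s"

text \<open>single-agent action value / advantage: a^{-i} ~ pi^{-i}(.|s)\<close>
definition Qi where
  "Qi n A P r \<gamma> \<pi> i s ai =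
     (\<Sum>a\<in>{a\<in>JA n A. a i = ai}. (\<Prod>q\<in>{..<n} - {i}. \<pi> q s (a q)) * Qfun n A P r \<gamma> \<pi> s a)"

definition Ai where
  "Ai n A P r \<gamma> \<pi> i s ai = Qi n A P r \<gamma> \<pi> i s ai - Vfun n A P r \<gamma> \<pi> s"

definition visit where
  "visit n A P \<gamma> d \<pi> s = (\<Sum>t. \<gamma> ^ t * sdist (Ppol n A P \<pi>) d t s)"

definition surr where
  "surr n A P r \<gamma> d \<pi> i p =
     (\<Sum>s\<in>UNIV. visit n A P \<gamma> d \<pi> s * (\<Sum>ai\<in>A i. p s ai * Ai n A P r \<gamma> \<pi> i s ai))"

definition epsA where
  "epsA n A P r \<gamma> \<pi> = Max {\<bar>Advfun n A P r \<gamma> \<pi> s a\<bar> | s a. a \<in> JA n A}"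

definition Cpen where
  "Cpen n A P r \<gamma> \<pi> = 4 * \<gamma> * epsA n A P r \<gamma> \<pi> / (1 - \<gamma>)^2"

definition KLcond :: "(nat \<Rightarrow> 'a set) \<Rightarrow> nat \<Rightarrow> ('s \<Rightarrow> 'a \<Rightarrow> real) \<Rightarrow> ('s \<Rightarrow> 'a \<Rightarrow> real) \<Rightarrow> 's \<Rightarrow> ereal" where
  "KLcond A i \<mu> \<nu> s =
     (\<Sum>a\<in>A i. if \<mu> s a = 0 then 0 else if \<nu> s a = 0 then \<infinity>
              else ereal (\<mu> s a * ln (\<mu> s a / \<nu> s a)))"

definition DmaxKL :: "(nat \<Rightarrow> 'a set) \<Rightarrow> nat \<Rightarrow> ('s \<Rightarrow> 'a \<Rightarrow> real) \<Rightarrow> ('s \<Rightarrow> 'a \<Rightarrow> real) \<Rightarrow> ereal" where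
  "DmaxKL A i \<mu> \<nu> = (SUP s. KLcond A i \<mu> \<nu> s)"

text \<open>micro-step objective F = L^i_Pi(tau, hat pi) - C * Dmax_KL(pi_old, hat pi), where Pi is the
  baseline joint policy (whose i-th component is pi_old)\<close>
definition Fobj where
  "Fobj n A P r \<gamma> d B i p =
     ereal (surr n A P r \<gamma> d B i p) - ereal (Cpen n A P r \<gamma> B) * DmaxKL A i (B i) p"

text \<open>Interleaved scheme: it k i j = pi^i_{k,j}; pi_k = (lambda i. it k i 0).
  Baseline joint policy Pi_{k,i,j} = (tau^{-i}_k, pi^i_{k,j}).\<close>
definition baseline :: "(nat \<Rightarrow> nat \<Rightarrow> nat \<Rightarrow> 's \<Rightarrow> 'a \<Rightarrow> real) \<Rightarrow> nat \<Rightarrow> nat \<Rightarrow> nat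
    \<Rightarrow> nat \<Rightarrow> 's \<Rightarrow> 'a \<Rightarrow> real" where
  "baseline it k i j = (\<lambda>q. if q < i then it (Suc k) q 0 else if q = i then it k i j else it k q 0)"

text \<open>pointwise (= Euclidean) convergence of joint policies on the product of simplices\<close>
definition pol_conv :: "nat \<Rightarrow> (nat \<Rightarrow> 'a set) \<Rightarrow> (nat \<Rightarrow> nat \<Rightarrow> 's \<Rightarrow> 'a \<Rightarrow> real)
    \<Rightarrow> (nat \<Rightarrow> 's \<Rightarrow> 'a \<Rightarrow> real) \<Rightarrow> bool" where
  "pol_conv n A sq lm \<longleftrightarrow> (\<forall>i<n. \<forall>s. \<forall>a\<in>A i. (\<lambda>k. sq k i s a) \<longlonglongrightarrow> lm i s a)"

end

theory Submission
  imports Defs "HOL-Analysis.Analysis"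
begin


definition stoch :: "('s::finite \<Rightarrow> 's \<Rightarrow> real) \<Rightarrow> bool" where
  "stoch K \<longleftrightarrow> (\<forall>s. (\<forall>s'. 0 \<le> K s s') \<and> (\<Sum>s'\<in>UNIV. K s s') = 1)"

definition isdist :: "('s::finite \<Rightarrow> real) \<Rightarrow> bool" where
  "isdist \<mu> \<longleftrightarrow> (\<forall>s. 0 \<le> \<mu> s) \<and> (\<Sum>s\<in>UNIV. \<mu> s) = 1"

definition push :: "('s::finite \<Rightarrow> 's \<Rightarrow> real) \<Rightarrow> ('s \<Rightarrow> real) \<Rightarrow> 's \<Rightarrow> real" where
  "push K \<mu> = (\<lambda>s'. \<Sum>s\<in>UNIV. \<mu> s * K s s')"

definition dl :: "'s \<Rightarrow> 's \<Rightarrow> real" where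
  "dl s = (\<lambda>x. if x = s then 1 else 0)"

definition Rv :: "('s::finite \<Rightarrow> 's \<Rightarrow> real) \<Rightarrow> ('s \<Rightarrow> real) \<Rightarrow> ('s \<Rightarrow> real) \<Rightarrow> real \<Rightarrow> real" where
  "Rv K g \<mu> \<gamma> = (\<Sum>t. \<gamma> ^ t * (\<Sum>s\<in>UNIV. sdist K \<mu> t s * g s))"

lemma sdist_Suc': "sdist K \<mu> (Suc t) = sdist K (push K \<mu>) t"
  by (induction t) (simp_all add: push_def)

lemma isdist_push:
  assumes "stoch K" "isdist \<mu>" shows "isdist (push K \<mu>)"
proof -
  have "(\<Sum>s'\<in>UNIV. \<Sum>s\<in>UNIV. \<mu> s * K s s') = (\<Sum>s\<in>UNIV. \<mu> s * (\<Sum>s'\<in>UNIV. K s s'))"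
    by (subst sum.swap) (simp add: sum_distrib_left)
  also have "\<dots> = 1" using assms by (simp add: stoch_def isdist_def)
  finally show ?thesis using assms unfolding isdist_def push_def stoch_def
    by (auto intro!: sum_nonneg)
qed

lemma isdist_sdist: "stoch K \<Longrightarrow> isdist \<mu> \<Longrightarrow> isdist (sdist K \<mu> t)"
  by (induction t arbitrary: \<mu>) (simp_all add: sdist_Suc' isdist_push del: sdist.simps(2))

lemma sum_dl: "(\<Sum>x\<in>UNIV. dl s x * f x) = f (s::'s::finite)"
proof -
  have "(\<Sum>x\<in>UNIV. dl s x * f x) = (\<Sum>x\<in>UNIV. if x = s then f x else 0)"
    by (rule sum.cong) (auto simp: dl_def)
  then show ?thesis by simp
qed

lemma sum_dl': "(\<Sum>x\<in>UNIV. f x * dl x s) = f (s::'s::finite)"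
proof -
  have "(\<Sum>x\<in>UNIV. f x * dl x s) = (\<Sum>x\<in>UNIV. if x = s then f x else 0)"
    by (rule sum.cong) (auto simp: dl_def)
  then show ?thesis by simp
qed

lemma isdist_dl: "isdist (dl s)"
  by (simp add: isdist_def dl_def)

lemma isdist_le1: "isdist \<mu> \<Longrightarrow> \<mu> s \<le> 1"
  unfolding isdist_def using member_le_sum[of s UNIV \<mu>] by auto

lemma isdist_stoch: "stoch K \<Longrightarrow> isdist (K s)"
  by (simp add: stoch_def isdist_def)

lemma isdist_bound:
  assumes "isdist \<mu>" "\<And>s. \<bar>g s\<bar> \<le> B"
  shows "\<bar>\<Sum>s\<in>UNIV. \<mu> s * g s\<bar> \<le> B"
proof -
  have "\<bar>\<Sum>s\<in>UNIV. \<mu> s * g s\<bar> \<le> (\<Sum>s\<in>UNIV. \<bar>\<mu> s * g s\<bar>)" by (rule sum_abs)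
  also have "\<dots> \<le> (\<Sum>s\<in>UNIV. \<mu> s * B)"
    using assms by (intro sum_mono) (auto simp: isdist_def abs_mult intro: mult_left_mono)
  also have "\<dots> = B" using assms by (simp add: isdist_def sum_distrib_right[symmetric])
  finally show ?thesis .
qed

lemma summable_geo_bound:
  fixes \<gamma> :: real
  assumes "0 \<le> \<gamma>" "\<gamma> < 1" "\<And>t. \<bar>X t\<bar> \<le> B"
  shows "summable (\<lambda>t. \<gamma> ^ t * X t)"
proof (rule summable_comparison_test)
  show "\<exists>N. \<forall>t\<ge>N. norm (\<gamma> ^ t * X t) \<le> B * \<gamma> ^ t"
  proof (intro exI allI impI)
    fix t :: nat
    have "\<bar>X t\<bar> * \<gamma> ^ t \<le> B * \<gamma> ^ t" using assms by (intro mult_right_mono) auto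
    then show "norm (\<gamma> ^ t * X t) \<le> B * \<gamma> ^ t" using assms by (simp add: abs_mult mult.commute)
  qed
  show "summable (\<lambda>t. B * \<gamma> ^ t)" using assms by (intro summable_mult summable_geometric) auto
qed

lemma Rv_summable:
  assumes "0 \<le> \<gamma>" "\<gamma> < 1" "stoch K" "isdist \<mu>" "\<And>s. \<bar>g s\<bar> \<le> B"
  shows "summable (\<lambda>t. \<gamma> ^ t * (\<Sum>s\<in>UNIV. sdist K \<mu> t s * g s))"
  using assms by (intro summable_geo_bound isdist_bound[OF isdist_sdist]) auto

lemma Rv_head:
  assumes "0 \<le> \<gamma>" "\<gamma> < 1" "stoch K" "isdist \<mu>" "\<And>s. \<bar>g s\<bar> \<le> B"
  shows "Rv K g \<mu> \<gamma> = (\<Sum>s\<in>UNIV. \<mu> s * g s) + \<gamma> * Rv K g (push K \<mu>) \<gamma>"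
proof -
  have sm: "summable (\<lambda>t. \<gamma> ^ t * (\<Sum>s\<in>UNIV. sdist K \<mu> t s * g s))"
    using Rv_summable[OF assms] .
  have "Rv K g \<mu> \<gamma> = (\<Sum>t. \<gamma> ^ Suc t * (\<Sum>s\<in>UNIV. sdist K \<mu> (Suc t) s * g s)) + (\<Sum>s\<in>UNIV. \<mu> s * g s)"
    unfolding Rv_def using suminf_split_head[OF sm] by simp
  also have "(\<Sum>t. \<gamma> ^ Suc t * (\<Sum>s\<in>UNIV. sdist K \<mu> (Suc t) s * g s)) = 
     (\<Sum>t. \<gamma> * (\<gamma> ^ t * (\<Sum>s\<in>UNIV. sdist K (push K \<mu>) t s * g s)))"
    by (simp only: sdist_Suc' power_Suc mult.assoc)
  also have "\<dots> = \<gamma> * Rv K g (push K \<mu>) \<gamma>"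
    unfolding Rv_def
    using Rv_summable[OF assms(1-3) isdist_push[OF assms(3,4)] assms(5)] by (rule suminf_mult)
  finally show ?thesis by simp
qed

lemma sdist_lin: "sdist K \<mu> t s' = (\<Sum>s\<in>UNIV. \<mu> s * sdist K (dl s) t s')"
proof (induction t arbitrary: s')
  case 0
  then show ?case by (simp add: sum_dl')
next
  case (Suc t)
  have "sdist K \<mu> (Suc t) s' = (\<Sum>x\<in>UNIV. (\<Sum>s\<in>UNIV. \<mu> s * sdist K (dl s) t x) * K x s')"
    using Suc by simp
  also have "\<dots> = (\<Sum>s\<in>UNIV. \<mu> s * (\<Sum>x\<in>UNIV. sdist K (dl s) t x * K x s'))"
    unfolding sum_distrib_right sum_distrib_left mult.assoc by (rule sum.swap)
  finally show ?case by simp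
qed

lemma Rv_lin:
  assumes "0 \<le> \<gamma>" "\<gamma> < 1" "stoch K" "\<And>s. \<bar>g s\<bar> \<le> B"
  shows "Rv K g \<mu> \<gamma> = (\<Sum>s\<in>UNIV. \<mu> s * Rv K g (dl s) \<gamma>)"
proof -
  have "Rv K g \<mu> \<gamma> = (\<Sum>t. \<Sum>s\<in>UNIV. \<mu> s * (\<gamma> ^ t * (\<Sum>x\<in>UNIV. sdist K (dl s) t x * g x)))"
    unfolding Rv_def
    apply (subst sdist_lin)
    unfolding sum_distrib_left sum_distrib_right by (subst sum.swap) (simp add: mult_ac)
  also have "\<dots> = (\<Sum>s\<in>UNIV. \<Sum>t. \<mu> s * (\<gamma> ^ t * (\<Sum>x\<in>UNIV. sdist K (dl s) t x * g x)))"
    using Rv_summable[OF assms(1-3) isdist_dl assms(4)]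
    by (intro suminf_sum summable_mult) auto
  also have "\<dots> = (\<Sum>s\<in>UNIV. \<mu> s * Rv K g (dl s) \<gamma>)"
    unfolding Rv_def
    using Rv_summable[OF assms(1-3) isdist_dl assms(4)]
    by (intro sum.cong refl suminf_mult) auto
  finally show ?thesis .
qed

lemma push_dl: "push K (dl s) = K s"
  unfolding push_def using sum_dl[of s "\<lambda>x. K x s'" for s'] by auto

lemma Rv_bellman:
  assumes "0 \<le> \<gamma>" "\<gamma> < 1" "stoch K" "\<And>s. \<bar>g s\<bar> \<le> B"
  shows "Rv K g (dl s) \<gamma> = g s + \<gamma> * (\<Sum>s'\<in>UNIV. K s s' * Rv K g (dl s') \<gamma>)"
proof -
  have "Rv K g (dl s) \<gamma> = (\<Sum>x\<in>UNIV. dl s x * g x) + \<gamma> * Rv K g (push K (dl s)) \<gamma>"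
    using Rv_head[OF assms(1-3) isdist_dl assms(4)] .
  also have "(\<Sum>x\<in>UNIV. dl s x * g x) = g s" by (rule sum_dl)
  also have "Rv K g (push K (dl s)) \<gamma> = (\<Sum>s'\<in>UNIV. K s s' * Rv K g (dl s') \<gamma>)"
    unfolding push_dl using Rv_lin[OF assms] .
  finally show ?thesis .
qed


lemma sdist_push_sum:
  "(\<Sum>s\<in>UNIV. sdist K \<mu> t s * (\<Sum>s'\<in>UNIV. K s s' * V s')) = (\<Sum>s'\<in>UNIV. sdist K \<mu> (Suc t) s' * V s')"
proof -
  have "(\<Sum>s\<in>UNIV. sdist K \<mu> t s * (\<Sum>s'\<in>UNIV. K s s' * V s'))
      = (\<Sum>s\<in>UNIV. \<Sum>s'\<in>UNIV. sdist K \<mu> t s * K s s' * V s')"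
    by (simp add: sum_distrib_left mult.assoc)
  also have "\<dots> = (\<Sum>s'\<in>UNIV. \<Sum>s\<in>UNIV. sdist K \<mu> t s * K s s' * V s')"
    by (rule sum.swap)
  also have "\<dots> = (\<Sum>s'\<in>UNIV. sdist K \<mu> (Suc t) s' * V s')"
    by (simp add: sum_distrib_right)
  finally show ?thesis .
qed

lemma Rv_telescope:
  assumes g: "0 \<le> \<gamma>" "\<gamma> < 1" "stoch K" "isdist \<mu>" "\<And>s. \<bar>g s\<bar> \<le> B"
  shows "(\<lambda>t. \<gamma> ^ t * (\<Sum>s\<in>UNIV. sdist K \<mu> t s * (g s + \<gamma> * (\<Sum>s'\<in>UNIV. K s s' * V s') - V s)))
     sums (Rv K g \<mu> \<gamma> - (\<Sum>s\<in>UNIV. \<mu> s * V s))"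
proof -
  define c where "c t = \<gamma> ^ t * (\<Sum>s\<in>UNIV. sdist K \<mu> t s * V s)" for t
  define BV where "BV = (\<Sum>x\<in>UNIV. \<bar>V x\<bar>)"
  have eq: "\<gamma> ^ t * (\<Sum>s\<in>UNIV. sdist K \<mu> t s * (g s + \<gamma> * (\<Sum>s'\<in>UNIV. K s s' * V s') - V s))
      = \<gamma> ^ t * (\<Sum>s\<in>UNIV. sdist K \<mu> t s * g s) + (c (Suc t) - c t)" for t
  proof -
    have "(\<Sum>s\<in>UNIV. sdist K \<mu> t s * (g s + \<gamma> * (\<Sum>s'\<in>UNIV. K s s' * V s') - V s))
      = (\<Sum>s\<in>UNIV. sdist K \<mu> t s * g s) + \<gamma> * (\<Sum>s\<in>UNIV. sdist K \<mu> t s * (\<Sum>s'\<in>UNIV. K s s' * V s'))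
        - (\<Sum>s\<in>UNIV. sdist K \<mu> t s * V s)"
      by (simp add: algebra_simps sum.distrib sum_subtractf sum_distrib_left)
    moreover have "c (Suc t) = \<gamma> ^ Suc t * (\<Sum>s\<in>UNIV. sdist K \<mu> t s * (\<Sum>s'\<in>UNIV. K s s' * V s'))"
      unfolding c_def sdist_push_sum ..
    moreover have alg: "\<And>x a y b c. (x::real) * (a + y * b - c) = x * a + (y * x * b - x * c)"
      by (simp add: algebra_simps)
    ultimately show ?thesis unfolding c_def by (simp only: power_Suc alg)
  qed
  have c0: "c \<longlonglongrightarrow> 0"
  proof (rule Lim_null_comparison)
    show "\<forall>\<^sub>F t in sequentially. norm (c t) \<le> BV * \<gamma> ^ t"
    proof (intro always_eventually allI)
      fix t
      have "\<bar>\<Sum>s\<in>UNIV. sdist K \<mu> t s * V s\<bar> \<le> BV"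
        unfolding BV_def using g
        by (intro isdist_bound[OF isdist_sdist]) (auto intro: member_le_sum)
      then show "norm (c t) \<le> BV * \<gamma> ^ t" using g
        by (simp add: c_def abs_mult mult.commute[of BV] mult_left_mono)
    qed
    show "(\<lambda>t. BV * \<gamma> ^ t) \<longlonglongrightarrow> 0" using g
      by (intro tendsto_mult_right_zero LIMSEQ_power_zero) auto
  qed
  have "(\<lambda>t. \<gamma> ^ t * (\<Sum>s\<in>UNIV. sdist K \<mu> t s * g s) + (c (Suc t) - c t)) sums (Rv K g \<mu> \<gamma> + (0 - c 0))"
    using sums_add[OF summable_sums[OF Rv_summable[OF g]] telescope_sums[OF c0]]
    unfolding Rv_def .
  moreover have "c 0 = (\<Sum>s\<in>UNIV. \<mu> s * V s)" by (simp add: c_def)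
  ultimately show ?thesis unfolding eq by simp
qed

lemma sdist_diff:
  assumes "stoch K" "stoch K'" "isdist \<mu>" "\<And>s. (\<Sum>s'\<in>UNIV. \<bar>K' s s' - K s s'\<bar>) \<le> \<delta>"
  shows "(\<Sum>s\<in>UNIV. \<bar>sdist K' \<mu> t s - sdist K \<mu> t s\<bar>) \<le> real t * \<delta>"
proof (induction t)
  case 0
  then show ?case by simp
next
  case (Suc t)
  let ?d' = "sdist K' \<mu> t" and ?d = "sdist K \<mu> t"
  have "(\<Sum>s'\<in>UNIV. \<bar>sdist K' \<mu> (Suc t) s' - sdist K \<mu> (Suc t) s'\<bar>)
     = (\<Sum>s'\<in>UNIV. \<bar>(\<Sum>s\<in>UNIV. (?d' s - ?d s) * K' s s') + (\<Sum>s\<in>UNIV. ?d s * (K' s s' - K s s'))\<bar>)"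
    by (simp add: algebra_simps sum.distrib sum_subtractf)
  also have "\<dots> \<le> (\<Sum>s'\<in>UNIV. (\<Sum>s\<in>UNIV. \<bar>?d' s - ?d s\<bar> * K' s s') + (\<Sum>s\<in>UNIV. ?d s * \<bar>K' s s' - K s s'\<bar>))"
  proof (intro sum_mono)
    fix s'
    have "\<bar>\<Sum>s\<in>UNIV. (?d' s - ?d s) * K' s s'\<bar> \<le> (\<Sum>s\<in>UNIV. \<bar>?d' s - ?d s\<bar> * K' s s')"
      using sum_abs[of "\<lambda>s. (?d' s - ?d s) * K' s s'" UNIV] assms(2)
      by (simp add: abs_mult stoch_def)
    moreover have "\<bar>\<Sum>s\<in>UNIV. ?d s * (K' s s' - K s s')\<bar> \<le> (\<Sum>s\<in>UNIV. ?d s * \<bar>K' s s' - K s s'\<bar>)"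
      using sum_abs[of "\<lambda>s. ?d s * (K' s s' - K s s')" UNIV] isdist_sdist[OF assms(1,3), of t]
      by (simp add: abs_mult isdist_def)
    ultimately show "\<bar>(\<Sum>s\<in>UNIV. (?d' s - ?d s) * K' s s') + (\<Sum>s\<in>UNIV. ?d s * (K' s s' - K s s'))\<bar>
        \<le> (\<Sum>s\<in>UNIV. \<bar>?d' s - ?d s\<bar> * K' s s') + (\<Sum>s\<in>UNIV. ?d s * \<bar>K' s s' - K s s'\<bar>)"
      by linarith
  qed
  also have "\<dots> = (\<Sum>s\<in>UNIV. \<bar>?d' s - ?d s\<bar> * (\<Sum>s'\<in>UNIV. K' s s')) + (\<Sum>s\<in>UNIV. ?d s * (\<Sum>s'\<in>UNIV. \<bar>K' s s' - K s s'\<bar>))"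
    by (simp add: sum.distrib sum_distrib_left sum.swap[of "\<lambda>s' s. \<bar>?d' s - ?d s\<bar> * K' s s'"]
        sum.swap[of "\<lambda>s' s. ?d s * \<bar>K' s s' - K s s'\<bar>"])
  also have "\<dots> \<le> real t * \<delta> + (\<Sum>s\<in>UNIV. ?d s * \<delta>)"
    using Suc assms(2,4) isdist_sdist[OF assms(1,3), of t]
    by (intro add_mono sum_mono mult_left_mono) (auto simp: stoch_def isdist_def)
  also have "\<dots> = real (Suc t) * \<delta>"
    using isdist_sdist[OF assms(1,3), of t] by (simp add: isdist_def sum_distrib_right[symmetric] sum_distrib_left[symmetric] algebra_simps)
  finally show ?case .
qed


definition vp :: "nat \<Rightarrow> (nat \<Rightarrow> 'a set) \<Rightarrow> (nat \<Rightarrow> 's \<Rightarrow> 'a \<Rightarrow> real) \<Rightarrow> bool" where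
  "vp n A \<pi> \<longleftrightarrow> (\<forall>q<n. valid_agent_pol A q (\<pi> q))"

locale mdp =
  fixes n :: nat and A :: "nat \<Rightarrow> 'a set" and P :: "'s::finite \<Rightarrow> (nat \<Rightarrow> 'a) \<Rightarrow> 's \<Rightarrow> real"
    and r :: "'s \<Rightarrow> (nat \<Rightarrow> 'a) \<Rightarrow> real" and \<gamma> Rmax :: real
  assumes A_fin: "\<forall>i<n. finite (A i) \<and> A i \<noteq> {}"
    and P_stoch: "\<forall>s. \<forall>a\<in>JA n A. (\<forall>s'. 0 \<le> P s a s') \<and> (\<Sum>s'\<in>UNIV. P s a s') = 1"
    and r_bound: "\<forall>s. \<forall>a\<in>JA n A. \<bar>r s a\<bar> \<le> Rmax"
    and g0: "0 \<le> \<gamma>" and g1: "\<gamma> < 1"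
begin

lemma finJA: "finite (JA n A)"
  unfolding JA_def using A_fin by (intro finite_PiE) auto

lemma JA_ne: "JA n A \<noteq> {}"
  unfolding JA_def using A_fin by (auto simp: PiE_eq_empty_iff)

lemma JA_mem: "a \<in> JA n A \<Longrightarrow> q < n \<Longrightarrow> a q \<in> A q"
  unfolding JA_def by (auto simp: PiE_iff)

lemma prodsum: "(\<Sum>a\<in>JA n A. \<Prod>q<n. f q (a q)) = (\<Prod>q<n. \<Sum>b\<in>A q. f q b :: real)"
  unfolding JA_def using prod_sum_PiE[of "{..<n}" A f] A_fin by auto

lemma factor:
  assumes "i < n"
  shows "(\<Sum>a\<in>JA n A. h (a i) * (\<Prod>q\<in>{..<n}-{i}. f q (a q)))
       = (\<Sum>b\<in>A i. h b) * (\<Prod>q\<in>{..<n}-{i}. \<Sum>b\<in>A q. f q b :: real)"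
proof -
  define f' where "f' = f(i := h)"
  have "(\<Prod>q<n. f' q (a q)) = h (a i) * (\<Prod>q\<in>{..<n}-{i}. f q (a q))" for a
  proof -
    have "(\<Prod>q<n. f' q (a q)) = f' i (a i) * (\<Prod>q\<in>{..<n}-{i}. f' q (a q))"
      using assms by (intro prod.remove) auto
    also have "(\<Prod>q\<in>{..<n}-{i}. f' q (a q)) = (\<Prod>q\<in>{..<n}-{i}. f q (a q))"
      by (intro prod.cong) (auto simp: f'_def)
    finally show ?thesis by (simp add: f'_def)
  qed
  then have "(\<Sum>a\<in>JA n A. h (a i) * (\<Prod>q\<in>{..<n}-{i}. f q (a q))) = (\<Prod>q<n. \<Sum>b\<in>A q. f' q b)"
    using prodsum[of f'] by simp
  also have "\<dots> = (\<Sum>b\<in>A i. f' i b) * (\<Prod>q\<in>{..<n}-{i}. \<Sum>b\<in>A q. f' q b)"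
    using assms by (intro prod.remove) auto
  also have "(\<Prod>q\<in>{..<n}-{i}. \<Sum>b\<in>A q. f' q b) = (\<Prod>q\<in>{..<n}-{i}. \<Sum>b\<in>A q. f q b)"
    by (intro prod.cong) (auto simp: f'_def)
  finally show ?thesis by (simp add: f'_def)
qed

lemma factor1:
  assumes "i < n" "vp n A \<pi>"
  shows "(\<Sum>a\<in>JA n A. h (a i) * (\<Prod>q\<in>{..<n}-{i}. \<pi> q s (a q))) = (\<Sum>b\<in>A i. h b)"
proof -
  have "(\<Prod>q\<in>{..<n}-{i}. \<Sum>b\<in>A q. \<pi> q s b) = 1"
    using assms(2) by (intro prod.neutral) (auto simp: vp_def valid_agent_pol_def)
  then show ?thesis using factor[OF assms(1), of h "\<lambda>q. \<pi> q s"] by simp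
qed

lemma jprob_split: "i < n \<Longrightarrow> jprob n \<pi> s a = \<pi> i s (a i) * (\<Prod>q\<in>{..<n}-{i}. \<pi> q s (a q))"
  unfolding jprob_def by (intro prod.remove) auto

lemma jprob_nonneg: "vp n A \<pi> \<Longrightarrow> a \<in> JA n A \<Longrightarrow> 0 \<le> jprob n \<pi> s a"
  unfolding jprob_def vp_def valid_agent_pol_def by (auto intro!: prod_nonneg JA_mem)

lemma jprob_sum: "vp n A \<pi> \<Longrightarrow> (\<Sum>a\<in>JA n A. jprob n \<pi> s a) = 1"
  unfolding jprob_def using prodsum[of "\<lambda>q b. \<pi> q s b"]
  by (simp add: vp_def valid_agent_pol_def)

lemma P_dist: "a \<in> JA n A \<Longrightarrow> isdist (P s a)"
  using P_stoch by (auto simp: isdist_def)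

lemma stoch_Ppol:
  assumes "vp n A \<pi>" shows "stoch (Ppol n A P \<pi>)"
proof -
  have "(\<Sum>s'\<in>UNIV. Ppol n A P \<pi> s s') = 1" for s
  proof -
    have "(\<Sum>s'\<in>UNIV. Ppol n A P \<pi> s s') = (\<Sum>a\<in>JA n A. jprob n \<pi> s a * (\<Sum>s'\<in>UNIV. P s a s'))"
      unfolding Ppol_def by (subst sum.swap) (simp add: sum_distrib_left)
    also have "\<dots> = (\<Sum>a\<in>JA n A. jprob n \<pi> s a)"
      using P_stoch by (intro sum.cong) auto
    finally show ?thesis using jprob_sum[OF assms] by simp
  qed
  moreover have "0 \<le> Ppol n A P \<pi> s s'" for s s'
    unfolding Ppol_def using P_stoch jprob_nonneg[OF assms] by (auto intro!: sum_nonneg)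
  ultimately show ?thesis by (simp add: stoch_def)
qed

lemma rpol_bound:
  assumes "vp n A \<pi>" shows "\<bar>rpol n A r \<pi> s\<bar> \<le> Rmax"
proof -
  have "\<bar>rpol n A r \<pi> s\<bar> \<le> (\<Sum>a\<in>JA n A. \<bar>jprob n \<pi> s a * r s a\<bar>)"
    unfolding rpol_def by (rule sum_abs)
  also have "\<dots> \<le> (\<Sum>a\<in>JA n A. jprob n \<pi> s a * Rmax)"
    using jprob_nonneg[OF assms] r_bound
    by (intro sum_mono) (auto simp: abs_mult intro: mult_left_mono)
  also have "\<dots> = Rmax" using jprob_sum[OF assms] by (simp add: sum_distrib_right[symmetric])
  finally show ?thesis .
qed

lemma ret_Rv: "ret n A P r \<gamma> \<pi> \<mu> = Rv (Ppol n A P \<pi>) (rpol n A r \<pi>) \<mu> \<gamma>"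
  by (simp add: ret_def Rv_def)

lemma Vfun_Rv: "Vfun n A P r \<gamma> \<pi> s = Rv (Ppol n A P \<pi>) (rpol n A r \<pi>) (dl s) \<gamma>"
  by (simp add: Vfun_def ret_Rv dl_def)

lemma V_bellman:
  assumes "vp n A \<pi>"
  shows "Vfun n A P r \<gamma> \<pi> s = rpol n A r \<pi> s + \<gamma> * (\<Sum>s'\<in>UNIV. Ppol n A P \<pi> s s' * Vfun n A P r \<gamma> \<pi> s')"
  unfolding Vfun_Rv using Rv_bellman[OF g0 g1 stoch_Ppol[OF assms] rpol_bound[OF assms]] .

lemma Q_eq:
  assumes "vp n A \<pi>" "a \<in> JA n A"
  shows "Qfun n A P r \<gamma> \<pi> s a = r s a + \<gamma> * (\<Sum>s'\<in>UNIV. P s a s' * Vfun n A P r \<gamma> \<pi> s')"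
  unfolding Qfun_def ret_Rv Vfun_Rv
  using Rv_lin[OF g0 g1 stoch_Ppol[OF assms(1)] rpol_bound[OF assms(1)], where \<mu>="P s a"] by simp

lemma V_Q:
  assumes "vp n A \<pi>"
  shows "Vfun n A P r \<gamma> \<pi> s = (\<Sum>a\<in>JA n A. jprob n \<pi> s a * Qfun n A P r \<gamma> \<pi> s a)"
proof -
  let ?V = "Vfun n A P r \<gamma> \<pi>"
  have "(\<Sum>a\<in>JA n A. jprob n \<pi> s a * Qfun n A P r \<gamma> \<pi> s a)
      = (\<Sum>a\<in>JA n A. jprob n \<pi> s a * (r s a + \<gamma> * (\<Sum>s'\<in>UNIV. P s a s' * ?V s')))"
    using Q_eq[OF assms] by (intro sum.cong) auto
  also have "\<dots> = rpol n A r \<pi> s + \<gamma> * (\<Sum>a\<in>JA n A. \<Sum>s'\<in>UNIV. jprob n \<pi> s a * P s a s' * ?V s')"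
    unfolding rpol_def by (simp add: algebra_simps sum.distrib sum_distrib_left)
  also have "(\<Sum>a\<in>JA n A. \<Sum>s'\<in>UNIV. jprob n \<pi> s a * P s a s' * ?V s') = (\<Sum>s'\<in>UNIV. Ppol n A P \<pi> s s' * ?V s')"
    unfolding Ppol_def sum_distrib_right by (rule sum.swap)
  finally show ?thesis using V_bellman[OF assms, of s] by simp
qed

lemma J_V:
  assumes "vp n A \<pi>"
  shows "Jret n A P r \<gamma> d \<pi> = (\<Sum>s\<in>UNIV. d s * Vfun n A P r \<gamma> \<pi> s)"
  unfolding Jret_def ret_Rv Vfun_Rv
  using Rv_lin[OF g0 g1 stoch_Ppol[OF assms] rpol_bound[OF assms]] .

lemma Jret_bound:
  assumes "vp n A \<pi>" "isdist d"
  shows "Jret n A P r \<gamma> d \<pi> \<le> Rmax / (1 - \<gamma>)"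
proof -
  have sm: "summable (\<lambda>t. \<gamma> ^ t * (\<Sum>s\<in>UNIV. sdist (Ppol n A P \<pi>) d t s * rpol n A r \<pi> s))"
    using Rv_summable[OF g0 g1 stoch_Ppol[OF assms(1)] assms(2) rpol_bound[OF assms(1)]] .
  have gs: "(\<lambda>t. Rmax * \<gamma> ^ t) sums (Rmax * (1 / (1 - \<gamma>)))"
    using g0 g1 by (intro sums_mult geometric_sums) auto
  have "Jret n A P r \<gamma> d \<pi> \<le> (\<Sum>t. Rmax * \<gamma> ^ t)"
    unfolding Jret_def ret_def
  proof (rule suminf_le[OF _ sm sums_summable[OF gs]])
    fix t
    have "\<bar>\<Sum>s\<in>UNIV. sdist (Ppol n A P \<pi>) d t s * rpol n A r \<pi> s\<bar> \<le> Rmax"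
      by (rule isdist_bound[OF isdist_sdist[OF stoch_Ppol[OF assms(1)] assms(2)] rpol_bound[OF assms(1)]])
    then have "\<gamma> ^ t * (\<Sum>s\<in>UNIV. sdist (Ppol n A P \<pi>) d t s * rpol n A r \<pi> s) \<le> \<gamma> ^ t * Rmax"
      using g0 by (intro mult_left_mono) auto
    then show "\<gamma> ^ t * (\<Sum>s\<in>UNIV. sdist (Ppol n A P \<pi>) d t s * rpol n A r \<pi> s) \<le> Rmax * \<gamma> ^ t"
      by (simp add: mult.commute)
  qed
  also have "\<dots> = Rmax / (1 - \<gamma>)" using sums_unique[OF gs] by simp
  finally show ?thesis .
qed

end


lemma kl_term:
  fixes p q :: real
  assumes "0 < p" "0 < q"
  shows "2 * p - 2 * (sqrt p * sqrt q) \<le> p * ln (p / q)"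
proof -
  define x where "x = sqrt q / sqrt p"
  have x0: "0 < x" using assms by (simp add: x_def)
  have "ln x = ln q / 2 - ln p / 2"
    using assms by (simp add: x_def ln_div ln_sqrt)
  then have lnpq: "ln (p / q) = - 2 * ln x" using assms by (simp add: ln_div)
  have "ln x \<le> x - 1" using ln_le_minus_one[OF x0] .
  then have "p * ln (p / q) \<ge> - 2 * p * (x - 1)" using assms lnpq
    by (simp add: mult_left_mono)
  moreover have "p * x = sqrt p * sqrt q"
    using assms by (simp add: x_def field_simps)
  ultimately show ?thesis by (simp add: algebra_simps)
qed

lemma pinsker_real:
  fixes p q :: "'b \<Rightarrow> real"
  assumes "finite S" "\<And>b. b \<in> S \<Longrightarrow> 0 \<le> p b" "\<And>b. b \<in> S \<Longrightarrow> 0 \<le> q b"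
    "sum p S = 1" "sum q S = 1"
  shows "(\<Sum>b\<in>S. \<bar>p b - q b\<bar>)\<^sup>2 \<le> 4 * (2 - 2 * (\<Sum>b\<in>S. sqrt (p b) * sqrt (q b)))"
proof -
  let ?a = "\<lambda>b. \<bar>sqrt (p b) - sqrt (q b)\<bar>" and ?c = "\<lambda>b. sqrt (p b) + sqrt (q b)"
  let ?m = "\<Sum>b\<in>S. sqrt (p b) * sqrt (q b)"
  have e1: "\<bar>p b - q b\<bar> = ?a b * ?c b" if "b \<in> S" for b
  proof -
    have "p b - q b = (sqrt (p b) - sqrt (q b)) * ?c b"
      using assms(2,3)[OF that] by (simp add: algebra_simps)
    then show ?thesis using assms(2,3)[OF that] by (simp add: abs_mult)
  qed
  have "(\<Sum>b\<in>S. \<bar>p b - q b\<bar>)\<^sup>2 = (\<Sum>b\<in>S. ?a b * ?c b)\<^sup>2"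
    using e1 by (metis (no_types, lifting) sum.cong)
  also have "\<dots> \<le> (\<Sum>b\<in>S. (?a b)\<^sup>2) * (\<Sum>b\<in>S. (?c b)\<^sup>2)"
    by (rule Cauchy_Schwarz_ineq_sum)
  also have "(\<Sum>b\<in>S. (?a b)\<^sup>2) = 2 - 2 * ?m"
  proof -
    have "(\<Sum>b\<in>S. (?a b)\<^sup>2) = (\<Sum>b\<in>S. p b + q b - 2 * (sqrt (p b) * sqrt (q b)))"
      using assms(2,3) by (intro sum.cong) (auto simp: power2_eq_square algebra_simps)
    also have "\<dots> = 2 - 2 * ?m"
      using assms(4,5) by (simp add: sum.distrib sum_subtractf sum_distrib_left)
    finally show ?thesis .
  qed
  also have "(\<Sum>b\<in>S. (?c b)\<^sup>2) = 2 + 2 * ?m"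
  proof -
    have "(\<Sum>b\<in>S. (?c b)\<^sup>2) = (\<Sum>b\<in>S. p b + q b + 2 * (sqrt (p b) * sqrt (q b)))"
      using assms(2,3) by (intro sum.cong) (auto simp: power2_eq_square algebra_simps)
    also have "\<dots> = 2 + 2 * ?m"
      using assms(4,5) by (simp add: sum.distrib sum_distrib_left)
    finally show ?thesis .
  qed
  also have "(2 - 2 * ?m) * (2 + 2 * ?m) \<le> 4 * (2 - 2 * ?m)"
  proof -
    have m1: "?m \<le> 1"
    proof -
      have "?m \<le> (\<Sum>b\<in>S. (p b + q b) / 2)"
      proof (intro sum_mono)
        fix b assume "b \<in> S"
        then have "0 \<le> (sqrt (p b) - sqrt (q b))\<^sup>2" by simp
        then show "sqrt (p b) * sqrt (q b) \<le> (p b + q b) / 2"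
          using assms(2,3)[OF \<open>b \<in> S\<close>] by (simp add: power2_eq_square algebra_simps)
      qed
      also have "\<dots> = 1" using assms(4,5) by (simp add: sum_divide_distrib[symmetric] sum.distrib)
      finally show ?thesis .
    qed
    then have "0 \<le> 2 - 2 * ?m" by simp
    have h: "(2 - 2 * ?m) * (2 + 2 * ?m) \<le> (2 - 2 * ?m) * 4"
      by (rule mult_left_mono) (use m1 \<open>0 \<le> 2 - 2 * ?m\<close> in auto)
    then show ?thesis by linarith
  qed
  finally show ?thesis .
qed


lemma KL_bound:
  fixes \<mu> \<nu> :: "'s \<Rightarrow> 'a \<Rightarrow> real"
  assumes fin: "finite (A i)" and nn: "\<And>b. b \<in> A i \<Longrightarrow> 0 \<le> \<mu> s b" "\<And>b. b \<in> A i \<Longrightarrow> 0 \<le> \<nu> s b"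
    and s1: "sum (\<mu> s) (A i) = 1" "sum (\<nu> s) (A i) = 1"
  shows "ereal ((\<Sum>b\<in>A i. \<bar>\<nu> s b - \<mu> s b\<bar>)\<^sup>2 / 4) \<le> KLcond A i \<mu> \<nu> s"
proof (cases "\<exists>b\<in>A i. \<mu> s b \<noteq> 0 \<and> \<nu> s b = 0")
  case True
  then have "KLcond A i \<mu> \<nu> s = \<infinity>"
    unfolding KLcond_def using fin by (subst sum_Pinfty) auto
  then show ?thesis by simp
next
  case False
  define T where "T b = (if \<mu> s b = 0 then 0 else \<mu> s b * ln (\<mu> s b / \<nu> s b))" for b
  have "KLcond A i \<mu> \<nu> s = (\<Sum>b\<in>A i. ereal (T b))"
    unfolding KLcond_def T_def using False by (intro sum.cong) auto
  also have "\<dots> = ereal (\<Sum>b\<in>A i. T b)" by simp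
  finally have K: "KLcond A i \<mu> \<nu> s = ereal (\<Sum>b\<in>A i. T b)" .
  have "(\<Sum>b\<in>A i. \<bar>\<nu> s b - \<mu> s b\<bar>) = (\<Sum>b\<in>A i. \<bar>\<mu> s b - \<nu> s b\<bar>)"
    by (simp add: abs_minus_commute)
  then have "(\<Sum>b\<in>A i. \<bar>\<nu> s b - \<mu> s b\<bar>)\<^sup>2 / 4 \<le> 2 - 2 * (\<Sum>b\<in>A i. sqrt (\<mu> s b) * sqrt (\<nu> s b))"
    using pinsker_real[OF fin nn s1] by simp
  also have "\<dots> = (\<Sum>b\<in>A i. 2 * \<mu> s b - 2 * (sqrt (\<mu> s b) * sqrt (\<nu> s b)))"
    using s1 by (simp add: sum_subtractf sum_distrib_left[symmetric])
  also have "\<dots> \<le> (\<Sum>b\<in>A i. T b)"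
  proof (intro sum_mono)
    fix b assume b: "b \<in> A i"
    show "2 * \<mu> s b - 2 * (sqrt (\<mu> s b) * sqrt (\<nu> s b)) \<le> T b"
    proof (cases "\<mu> s b = 0")
      case True then show ?thesis by (simp add: T_def)
    next
      case F: False
      then have "0 < \<mu> s b" "0 < \<nu> s b" using nn[OF b] False b by force+
      then show ?thesis using kl_term F by (simp add: T_def)
    qed
  qed
  finally show ?thesis unfolding K by simp
qed


context mdp
begin

lemma jprob_agree:
  assumes "i < n" "\<forall>q. q \<noteq> i \<longrightarrow> \<pi>' q = \<pi> q"
  shows "jprob n \<pi>' s a = \<pi>' i s (a i) * (\<Prod>q\<in>{..<n}-{i}. \<pi> q s (a q))"
proof -
  have "(\<Prod>q\<in>{..<n}-{i}. \<pi>' q s (a q)) = (\<Prod>q\<in>{..<n}-{i}. \<pi> q s (a q))"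
    using assms(2) by (intro prod.cong) auto
  then show ?thesis using jprob_split[OF assms(1), of \<pi>' s a] by simp
qed

lemma prod_rest_nonneg: "vp n A \<pi> \<Longrightarrow> a \<in> JA n A \<Longrightarrow> 0 \<le> (\<Prod>q\<in>{..<n}-{i}. \<pi> q s (a q))"
  unfolding vp_def valid_agent_pol_def by (auto intro!: prod_nonneg JA_mem)

lemma L1_jp:
  assumes i: "i < n" and vp: "vp n A \<pi>" and ag: "\<forall>q. q \<noteq> i \<longrightarrow> \<pi>' q = \<pi> q"
  shows "(\<Sum>a\<in>JA n A. \<bar>jprob n \<pi>' s a - jprob n \<pi> s a\<bar>) = (\<Sum>b\<in>A i. \<bar>\<pi>' i s b - \<pi> i s b\<bar>)"
proof -
  have "(\<Sum>a\<in>JA n A. \<bar>jprob n \<pi>' s a - jprob n \<pi> s a\<bar>)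
     = (\<Sum>a\<in>JA n A. \<bar>\<pi>' i s (a i) - \<pi> i s (a i)\<bar> * (\<Prod>q\<in>{..<n}-{i}. \<pi> q s (a q)))"
  proof (intro sum.cong refl)
    fix a assume a: "a \<in> JA n A"
    show "\<bar>jprob n \<pi>' s a - jprob n \<pi> s a\<bar> = \<bar>\<pi>' i s (a i) - \<pi> i s (a i)\<bar> * (\<Prod>q\<in>{..<n}-{i}. \<pi> q s (a q))"
      unfolding jprob_agree[OF i ag] jprob_split[OF i, where \<pi>=\<pi>]
      using prod_rest_nonneg[OF vp a, where i=i and s=s] by (simp add: left_diff_distrib[symmetric] abs_mult)
  qed
  also have "\<dots> = (\<Sum>b\<in>A i. \<bar>\<pi>' i s b - \<pi> i s b\<bar>)"
    by (rule factor1[OF i vp])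
  finally show ?thesis .
qed

lemma Q_pol:
  assumes "vp n A \<pi>" "vp n A \<pi>'"
  shows "(\<Sum>a\<in>JA n A. jprob n \<pi>' s a * Qfun n A P r \<gamma> \<pi> s a)
     = rpol n A r \<pi>' s + \<gamma> * (\<Sum>s'\<in>UNIV. Ppol n A P \<pi>' s s' * Vfun n A P r \<gamma> \<pi> s')"
proof -
  let ?V = "Vfun n A P r \<gamma> \<pi>"
  have "(\<Sum>a\<in>JA n A. jprob n \<pi>' s a * Qfun n A P r \<gamma> \<pi> s a)
      = (\<Sum>a\<in>JA n A. jprob n \<pi>' s a * (r s a + \<gamma> * (\<Sum>s'\<in>UNIV. P s a s' * ?V s')))"
    using Q_eq[OF assms(1)] by (intro sum.cong) auto
  also have "\<dots> = rpol n A r \<pi>' s + \<gamma> * (\<Sum>a\<in>JA n A. \<Sum>s'\<in>UNIV. jprob n \<pi>' s a * P s a s' * ?V s')"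
    unfolding rpol_def by (simp add: algebra_simps sum.distrib sum_distrib_left)
  also have "(\<Sum>a\<in>JA n A. \<Sum>s'\<in>UNIV. jprob n \<pi>' s a * P s a s' * ?V s') = (\<Sum>s'\<in>UNIV. Ppol n A P \<pi>' s s' * ?V s')"
    unfolding Ppol_def sum_distrib_right by (rule sum.swap)
  finally show ?thesis .
qed

lemma Qi_sum:
  assumes i: "i < n" and ag: "\<forall>q. q \<noteq> i \<longrightarrow> \<pi>' q = \<pi> q"
  shows "(\<Sum>ai\<in>A i. \<pi>' i s ai * Qi n A P r \<gamma> \<pi> i s ai)
       = (\<Sum>a\<in>JA n A. jprob n \<pi>' s a * Qfun n A P r \<gamma> \<pi> s a)"
proof -
  define X where "X a = (\<Prod>q\<in>{..<n}-{i}. \<pi> q s (a q)) * Qfun n A P r \<gamma> \<pi> s a" for a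
  have "(\<Sum>ai\<in>A i. \<pi>' i s ai * Qi n A P r \<gamma> \<pi> i s ai)
      = (\<Sum>ai\<in>A i. \<Sum>a\<in>JA n A. if a i = ai then \<pi>' i s ai * X a else 0)"
    unfolding Qi_def sum.inter_filter[OF finJA] X_def
    by (simp add: sum_distrib_left if_distrib cong: if_cong)
  also have "\<dots> = (\<Sum>a\<in>JA n A. \<Sum>ai\<in>A i. if a i = ai then \<pi>' i s ai * X a else 0)"
    by (rule sum.swap)
  also have "\<dots> = (\<Sum>a\<in>JA n A. \<pi>' i s (a i) * X a)"
    using JA_mem[OF _ i] A_fin i by (intro sum.cong refl) (simp add: sum.delta')
  also have "\<dots> = (\<Sum>a\<in>JA n A. jprob n \<pi>' s a * Qfun n A P r \<gamma> \<pi> s a)"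
    unfolding X_def jprob_agree[OF i ag] by (simp add: mult.assoc)
  finally show ?thesis .
qed

lemma surr_inner:
  assumes i: "i < n" and vp: "vp n A \<pi>" "vp n A \<pi>'" and ag: "\<forall>q. q \<noteq> i \<longrightarrow> \<pi>' q = \<pi> q"
  shows "(\<Sum>ai\<in>A i. \<pi>' i s ai * Ai n A P r \<gamma> \<pi> i s ai)
       = (\<Sum>a\<in>JA n A. jprob n \<pi>' s a * Advfun n A P r \<gamma> \<pi> s a)"
proof -
  let ?V = "Vfun n A P r \<gamma> \<pi> s"
  have s1: "(\<Sum>ai\<in>A i. \<pi>' i s ai) = 1" using vp(2) i by (simp add: vp_def valid_agent_pol_def)
  have "(\<Sum>ai\<in>A i. \<pi>' i s ai * Ai n A P r \<gamma> \<pi> i s ai)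
      = (\<Sum>ai\<in>A i. \<pi>' i s ai * Qi n A P r \<gamma> \<pi> i s ai) - (\<Sum>ai\<in>A i. \<pi>' i s ai) * ?V"
    unfolding Ai_def by (simp add: right_diff_distrib sum_subtractf sum_distrib_right[symmetric])
  also have "\<dots> = (\<Sum>a\<in>JA n A. jprob n \<pi>' s a * Qfun n A P r \<gamma> \<pi> s a) - (\<Sum>a\<in>JA n A. jprob n \<pi>' s a) * ?V"
    unfolding Qi_sum[OF i ag] s1 jprob_sum[OF vp(2)] ..
  also have "\<dots> = (\<Sum>a\<in>JA n A. jprob n \<pi>' s a * Advfun n A P r \<gamma> \<pi> s a)"
    unfolding Advfun_def by (simp add: right_diff_distrib sum_subtractf sum_distrib_right[symmetric])
  finally show ?thesis .
qed

lemma visit_sum: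
  assumes "isdist d" "vp n A \<pi>"
  shows "(\<Sum>s\<in>UNIV. visit n A P \<gamma> d \<pi> s * h s) = Rv (Ppol n A P \<pi>) h d \<gamma>"
proof -
  let ?D = "sdist (Ppol n A P \<pi>) d"
  have sm: "summable (\<lambda>t. \<gamma> ^ t * ?D t s)" for s
  proof (rule summable_geo_bound[OF g0 g1])
    fix t
    have "isdist (?D t)" by (rule isdist_sdist[OF stoch_Ppol[OF assms(2)] assms(1)])
    then show "\<bar>?D t s\<bar> \<le> 1" using isdist_le1 by (auto simp: isdist_def)
  qed
  have "(\<Sum>s\<in>UNIV. visit n A P \<gamma> d \<pi> s * h s) = (\<Sum>s\<in>UNIV. \<Sum>t. \<gamma> ^ t * ?D t s * h s)"
    unfolding visit_def using sm by (intro sum.cong refl suminf_mult2)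
  also have "\<dots> = (\<Sum>t. \<Sum>s\<in>UNIV. \<gamma> ^ t * ?D t s * h s)"
    using sm by (intro suminf_sum[symmetric] summable_mult2)
  also have "\<dots> = Rv (Ppol n A P \<pi>) h d \<gamma>"
    unfolding Rv_def by (simp add: sum_distrib_left mult.assoc)
  finally show ?thesis .
qed

lemma Adv_fin: "finite {\<bar>Advfun n A P r \<gamma> \<pi> s a\<bar> | s a. a \<in> JA n A}"
proof -
  have "{\<bar>Advfun n A P r \<gamma> \<pi> s a\<bar> | s a. a \<in> JA n A} = (\<lambda>(s,a). \<bar>Advfun n A P r \<gamma> \<pi> s a\<bar>) ` (UNIV \<times> JA n A)"
    by auto
  then show ?thesis using finJA by simp
qed

lemma Adv_le: "a \<in> JA n A \<Longrightarrow> \<bar>Advfun n A P r \<gamma> \<pi> s a\<bar> \<le> epsA n A P r \<gamma> \<pi>"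
  unfolding epsA_def by (rule Max_ge[OF Adv_fin]) auto

lemma eps_nonneg: "0 \<le> epsA n A P r \<gamma> \<pi>"
proof -
  obtain a where "a \<in> JA n A" using JA_ne by auto
  then show ?thesis using Adv_le[of a \<pi>] by (meson abs_ge_zero order_trans)
qed

lemma Adv_zero:
  assumes "vp n A \<pi>"
  shows "(\<Sum>a\<in>JA n A. jprob n \<pi> s a * Advfun n A P r \<gamma> \<pi> s a) = 0"
proof -
  have "(\<Sum>a\<in>JA n A. jprob n \<pi> s a * Advfun n A P r \<gamma> \<pi> s a)
     = (\<Sum>a\<in>JA n A. jprob n \<pi> s a * Qfun n A P r \<gamma> \<pi> s a) - (\<Sum>a\<in>JA n A. jprob n \<pi> s a) * Vfun n A P r \<gamma> \<pi> s"
    unfolding Advfun_def by (simp add: right_diff_distrib sum_subtractf sum_distrib_right[symmetric])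
  then show ?thesis using V_Q[OF assms, of s] jprob_sum[OF assms, of s] by simp
qed

lemma Abar_bound:
  assumes i: "i < n" and vp: "vp n A \<pi>" "vp n A \<pi>'" and ag: "\<forall>q. q \<noteq> i \<longrightarrow> \<pi>' q = \<pi> q"
  shows "\<bar>\<Sum>a\<in>JA n A. jprob n \<pi>' s a * Advfun n A P r \<gamma> \<pi> s a\<bar>
     \<le> epsA n A P r \<gamma> \<pi> * (\<Sum>b\<in>A i. \<bar>\<pi>' i s b - \<pi> i s b\<bar>)"
proof -
  let ?Ad = "Advfun n A P r \<gamma> \<pi> s" and ?e = "epsA n A P r \<gamma> \<pi>"
  have "(\<Sum>a\<in>JA n A. jprob n \<pi>' s a * ?Ad a)
      = (\<Sum>a\<in>JA n A. jprob n \<pi>' s a * ?Ad a) - (\<Sum>a\<in>JA n A. jprob n \<pi> s a * ?Ad a)"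
    using Adv_zero[OF vp(1)] by simp
  also have "\<dots> = (\<Sum>a\<in>JA n A. (jprob n \<pi>' s a - jprob n \<pi> s a) * ?Ad a)"
    by (simp add: sum_subtractf left_diff_distrib)
  finally have "\<bar>\<Sum>a\<in>JA n A. jprob n \<pi>' s a * ?Ad a\<bar>
     \<le> (\<Sum>a\<in>JA n A. \<bar>(jprob n \<pi>' s a - jprob n \<pi> s a) * ?Ad a\<bar>)"
    by (simp add: sum_abs)
  also have "\<dots> \<le> (\<Sum>a\<in>JA n A. \<bar>jprob n \<pi>' s a - jprob n \<pi> s a\<bar> * ?e)"
    using Adv_le by (intro sum_mono) (auto simp: abs_mult intro: mult_left_mono)
  also have "\<dots> = ?e * (\<Sum>a\<in>JA n A. \<bar>jprob n \<pi>' s a - jprob n \<pi> s a\<bar>)"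
    by (simp add: sum_distrib_left mult.commute)
  also have "\<dots> = ?e * (\<Sum>b\<in>A i. \<bar>\<pi>' i s b - \<pi> i s b\<bar>)"
    using L1_jp[OF i vp(1) ag] by simp
  finally show ?thesis .
qed

lemma Ppol_diff:
  assumes i: "i < n" and vp: "vp n A \<pi>" "vp n A \<pi>'" and ag: "\<forall>q. q \<noteq> i \<longrightarrow> \<pi>' q = \<pi> q"
  shows "(\<Sum>s'\<in>UNIV. \<bar>Ppol n A P \<pi>' s s' - Ppol n A P \<pi> s s'\<bar>) \<le> (\<Sum>b\<in>A i. \<bar>\<pi>' i s b - \<pi> i s b\<bar>)"
proof -
  let ?j = "\<lambda>a. jprob n \<pi>' s a - jprob n \<pi> s a"
  have "(\<Sum>s'\<in>UNIV. \<bar>Ppol n A P \<pi>' s s' - Ppol n A P \<pi> s s'\<bar>) = (\<Sum>s'\<in>UNIV. \<bar>\<Sum>a\<in>JA n A. ?j a * P s a s'\<bar>)"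
    unfolding Ppol_def by (simp add: sum_subtractf left_diff_distrib)
  also have "\<dots> \<le> (\<Sum>s'\<in>UNIV. \<Sum>a\<in>JA n A. \<bar>?j a\<bar> * P s a s')"
    using P_stoch by (intro sum_mono order_trans[OF sum_abs]) (auto simp: abs_mult)
  also have "\<dots> = (\<Sum>a\<in>JA n A. \<bar>?j a\<bar> * (\<Sum>s'\<in>UNIV. P s a s'))"
    by (subst sum.swap) (simp add: sum_distrib_left)
  also have "\<dots> = (\<Sum>a\<in>JA n A. \<bar>?j a\<bar>)"
    using P_stoch by (intro sum.cong) auto
  also have "\<dots> = (\<Sum>b\<in>A i. \<bar>\<pi>' i s b - \<pi> i s b\<bar>)" by (rule L1_jp[OF i vp(1) ag])
  finally show ?thesis .
qed

end


context mdp
begin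

lemma one_step:
  assumes i: "i < n" and vp: "vp n A \<pi>" "vp n A \<pi>'" and ag: "\<forall>q. q \<noteq> i \<longrightarrow> \<pi>' q = \<pi> q"
    and d: "isdist d"
  shows "Fobj n A P r \<gamma> d \<pi> i (\<pi>' i) \<le> ereal (Jret n A P r \<gamma> d \<pi>' - Jret n A P r \<gamma> d \<pi>)"
proof -
  define K where "K = Ppol n A P \<pi>"
  define K' where "K' = Ppol n A P \<pi>'"
  define V where "V = Vfun n A P r \<gamma> \<pi>"
  define g' where "g' = rpol n A r \<pi>'"
  define Ab where "Ab s = (\<Sum>a\<in>JA n A. jprob n \<pi>' s a * Advfun n A P r \<gamma> \<pi> s a)" for s
  define \<epsilon> where "\<epsilon> = epsA n A P r \<gamma> \<pi>"
  define \<delta>s where "\<delta>s s = (\<Sum>b\<in>A i. \<bar>\<pi>' i s b - \<pi> i s b\<bar>)" for s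
  define \<delta> where "\<delta> = Max (range \<delta>s)"
  define J where "J = Jret n A P r \<gamma> d \<pi>"
  define J' where "J' = Jret n A P r \<gamma> d \<pi>'"
  define S where "S = surr n A P r \<gamma> d \<pi> i (\<pi>' i)"
  have \<delta>s_le: "\<delta>s s \<le> \<delta>" for s unfolding \<delta>_def by (rule Max_ge) auto
  have \<delta>s0: "0 \<le> \<delta>s s" for s unfolding \<delta>s_def by (auto intro: sum_nonneg)
  have \<delta>0: "0 \<le> \<delta>" using \<delta>s_le[of undefined] \<delta>s0[of undefined] by linarith
  have \<epsilon>0: "0 \<le> \<epsilon>" unfolding \<epsilon>_def by (rule eps_nonneg)
  have Abb: "\<bar>Ab s\<bar> \<le> \<epsilon> * \<delta>" for s
  proof -
    have "\<bar>Ab s\<bar> \<le> \<epsilon> * \<delta>s s" unfolding Ab_def \<epsilon>_def \<delta>s_def by (rule Abar_bound[OF i vp ag])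
    also have "\<dots> \<le> \<epsilon> * \<delta>" using \<epsilon>0 \<delta>s_le by (intro mult_left_mono) auto
    finally show ?thesis .
  qed
  have stK: "stoch K" unfolding K_def by (rule stoch_Ppol[OF vp(1)])
  have stK': "stoch K'" unfolding K'_def by (rule stoch_Ppol[OF vp(2)])
  have S_eq: "S = Rv K Ab d \<gamma>"
  proof -
    have "S = (\<Sum>s\<in>UNIV. visit n A P \<gamma> d \<pi> s * Ab s)"
      unfolding S_def surr_def Ab_def surr_inner[OF i vp ag] ..
    also have "\<dots> = Rv K Ab d \<gamma>" unfolding K_def by (rule visit_sum[OF d vp(1)])
    finally show ?thesis .
  qed
  have sumA: "(\<lambda>t. \<gamma> ^ t * (\<Sum>s\<in>UNIV. sdist K d t s * Ab s)) sums S"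
    unfolding S_eq Rv_def by (rule summable_sums[OF Rv_summable[OF g0 g1 stK d Abb]])
  have Ab_eq: "Ab s = g' s + \<gamma> * (\<Sum>s'\<in>UNIV. K' s s' * V s') - V s" for s
  proof -
    have "Ab s = (\<Sum>a\<in>JA n A. jprob n \<pi>' s a * Qfun n A P r \<gamma> \<pi> s a) - (\<Sum>a\<in>JA n A. jprob n \<pi>' s a) * V s"
      unfolding Ab_def Advfun_def V_def by (simp add: right_diff_distrib sum_subtractf sum_distrib_right[symmetric])
    then show ?thesis unfolding Q_pol[OF vp] jprob_sum[OF vp(2)] g'_def K'_def V_def by simp
  qed
  have sumB: "(\<lambda>t. \<gamma> ^ t * (\<Sum>s\<in>UNIV. sdist K' d t s * Ab s)) sums (J' - J)"
  proof -
    have "(\<lambda>t. \<gamma> ^ t * (\<Sum>s\<in>UNIV. sdist K' d t s * (g' s + \<gamma> * (\<Sum>s'\<in>UNIV. K' s s' * V s') - V s)))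
       sums (Rv K' g' d \<gamma> - (\<Sum>s\<in>UNIV. d s * V s))"
      by (rule Rv_telescope[OF g0 g1 stK' d]) (use rpol_bound[OF vp(2)] in \<open>auto simp: g'_def\<close>)
    moreover have "Rv K' g' d \<gamma> = J'" unfolding J'_def Jret_def ret_Rv K'_def g'_def ..
    moreover have "(\<Sum>s\<in>UNIV. d s * V s) = J" unfolding J_def V_def by (rule J_V[OF vp(1), symmetric])
    ultimately show ?thesis unfolding Ab_eq by simp
  qed
  define X where "X t = \<gamma> ^ t * (\<Sum>s\<in>UNIV. (sdist K' d t s - sdist K d t s) * Ab s)" for t
  have sumX: "X sums (J' - J - S)"
  proof -
    have "X = (\<lambda>t. \<gamma> ^ t * (\<Sum>s\<in>UNIV. sdist K' d t s * Ab s) - \<gamma> ^ t * (\<Sum>s\<in>UNIV. sdist K d t s * Ab s))"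
      unfolding X_def by (auto simp: left_diff_distrib sum_subtractf right_diff_distrib)
    then show ?thesis using sums_diff[OF sumB sumA] by simp
  qed
  have X0: "X 0 = 0" by (simp add: X_def)
  have sumX': "(\<lambda>t. X (Suc t)) sums (J' - J - S)" using sumX X0 by (simp add: sums_Suc_iff)
  define c where "c = \<gamma> * \<epsilon> * \<delta>\<^sup>2"
  have Xb: "- (c * (of_nat (Suc t) * \<gamma> ^ t)) \<le> X (Suc t)" for t
  proof -
    have "\<bar>\<Sum>s\<in>UNIV. (sdist K' d (Suc t) s - sdist K d (Suc t) s) * Ab s\<bar>
        \<le> (\<Sum>s\<in>UNIV. \<bar>sdist K' d (Suc t) s - sdist K d (Suc t) s\<bar> * (\<epsilon> * \<delta>))"
      using Abb by (intro order_trans[OF sum_abs] sum_mono) (auto simp: abs_mult intro: mult_left_mono)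
    also have "\<dots> = (\<Sum>s\<in>UNIV. \<bar>sdist K' d (Suc t) s - sdist K d (Suc t) s\<bar>) * (\<epsilon> * \<delta>)"
      by (simp add: sum_distrib_right)
    also have "\<dots> \<le> (real (Suc t) * \<delta>) * (\<epsilon> * \<delta>)"
    proof (rule mult_right_mono)
      show "(\<Sum>s\<in>UNIV. \<bar>sdist K' d (Suc t) s - sdist K d (Suc t) s\<bar>) \<le> real (Suc t) * \<delta>"
      proof (rule sdist_diff[OF stK stK' d])
        fix s
        show "(\<Sum>s'\<in>UNIV. \<bar>K' s s' - K s s'\<bar>) \<le> \<delta>"
          using Ppol_diff[OF i vp ag, of s] \<delta>s_le[of s] unfolding K_def K'_def \<delta>s_def by linarith
      qed
      show "0 \<le> \<epsilon> * \<delta>" using \<epsilon>0 \<delta>0 by simp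
    qed
    finally have h: "\<bar>\<Sum>s\<in>UNIV. (sdist K' d (Suc t) s - sdist K d (Suc t) s) * Ab s\<bar> \<le> real (Suc t) * \<delta> * (\<epsilon> * \<delta>)" .
    have "\<bar>X (Suc t)\<bar> \<le> \<gamma> ^ Suc t * (real (Suc t) * \<delta> * (\<epsilon> * \<delta>))"
      unfolding X_def using h g0 by (simp add: abs_mult mult_left_mono)
    also have "\<dots> = c * (of_nat (Suc t) * \<gamma> ^ t)"
      by (simp add: c_def power2_eq_square)
    finally show ?thesis by linarith
  qed
  have gd: "(\<lambda>t. - c * (of_nat (Suc t) * \<gamma> ^ t)) sums (- c * (1 / (1 - \<gamma>)\<^sup>2))"
    using g0 g1 by (intro sums_mult geometric_deriv_sums) auto
  have low: "- c * (1 / (1 - \<gamma>)\<^sup>2) \<le> J' - J - S"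
    by (rule sums_le[OF _ gd sumX']) (use Xb in simp)
  obtain s0 where s0: "\<delta> = \<delta>s s0"
  proof -
    have "\<delta> \<in> range \<delta>s" unfolding \<delta>_def by (rule Max_in) auto
    then show ?thesis using that by auto
  qed
  have KL: "ereal (\<delta>\<^sup>2 / 4) \<le> DmaxKL A i (\<pi> i) (\<pi>' i)"
  proof -
    have "ereal (\<delta>\<^sup>2 / 4) \<le> KLcond A i (\<pi> i) (\<pi>' i) s0"
      unfolding s0 \<delta>s_def
      using vp i A_fin by (intro KL_bound) (auto simp: vp_def valid_agent_pol_def)
    also have "\<dots> \<le> DmaxKL A i (\<pi> i) (\<pi>' i)" unfolding DmaxKL_def by (rule SUP_upper) auto
    finally show ?thesis .
  qed
  define C where "C = Cpen n A P r \<gamma> \<pi>"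
  have C0: "0 \<le> C" unfolding C_def Cpen_def \<epsilon>_def[symmetric] using g0 \<epsilon>0 by simp
  have Cc: "C * (\<delta>\<^sup>2 / 4) = c * (1 / (1 - \<gamma>)\<^sup>2)"
    unfolding C_def Cpen_def \<epsilon>_def[symmetric] c_def by (simp add: field_simps)
  have "Fobj n A P r \<gamma> d \<pi> i (\<pi>' i) = ereal S - ereal C * DmaxKL A i (\<pi> i) (\<pi>' i)"
    unfolding Fobj_def S_def C_def ..
  also have "\<dots> \<le> ereal S - ereal C * ereal (\<delta>\<^sup>2 / 4)"
    by (intro ereal_minus_mono order_refl ereal_mult_left_mono KL) (use C0 in simp)
  also have "\<dots> = ereal (S - C * (\<delta>\<^sup>2 / 4))" by simp
  also have "\<dots> \<le> ereal (J' - J)" using low Cc by simp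
  finally show ?thesis unfolding J_def J'_def .
qed

lemma Fobj_self:
  assumes i: "i < n" and vp: "vp n A \<pi>" and d: "isdist d"
  shows "Fobj n A P r \<gamma> d \<pi> i (\<pi> i) = 0"
proof -
  have ag: "\<forall>q. q \<noteq> i \<longrightarrow> \<pi> q = \<pi> q" by simp
  have "surr n A P r \<gamma> d \<pi> i (\<pi> i) = 0"
    unfolding surr_def surr_inner[OF i vp vp ag] Adv_zero[OF vp] by simp
  moreover have "KLcond A i (\<pi> i) (\<pi> i) s = 0" for s
    unfolding KLcond_def by (intro sum.neutral) auto
  then have "DmaxKL A i (\<pi> i) (\<pi> i) = 0" unfolding DmaxKL_def by simp
  ultimately show ?thesis unfolding Fobj_def by (simp add: zero_ereal_def)
qed

end


lemma subseq_finite: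
  fixes x :: "nat \<Rightarrow> 'c \<Rightarrow> real"
  assumes "finite S" "\<And>k c. c \<in> S \<Longrightarrow> \<bar>x k c\<bar> \<le> B"
  shows "\<exists>kk l. strict_mono kk \<and> (\<forall>c\<in>S. (\<lambda>m. x (kk m) c) \<longlonglongrightarrow> l c)"
  using assms
proof (induction S rule: finite_induct)
  case empty
  show ?case by (rule exI[of _ id]) (auto simp: strict_mono_def)
next
  case (insert c S)
  obtain kk l where kk: "strict_mono kk" "\<forall>c'\<in>S. (\<lambda>m. x (kk m) c') \<longlonglongrightarrow> l c'"
    using insert by auto
  have "bounded (range (\<lambda>m. x (kk m) c))"
    unfolding bounded_iff using insert.prems by auto
  then obtain l0 r where r: "strict_mono r" "((\<lambda>m. x (kk m) c) \<circ> r) \<longlonglongrightarrow> l0"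
    using bounded_imp_convergent_subsequence by blast
  show ?case
  proof (intro exI conjI ballI)
    show "strict_mono (kk \<circ> r)" using kk(1) r(1) by (rule strict_mono_o)
    fix c' assume c': "c' \<in> insert c S"
    show "(\<lambda>m. x ((kk \<circ> r) m) c') \<longlonglongrightarrow> (l(c := l0)) c'"
    proof (cases "c' = c")
      case True then show ?thesis using r(2) by (simp add: o_def)
    next
      case False
      then have "c' \<in> S" using c' by auto
      then have "((\<lambda>m. x (kk m) c') \<circ> r) \<longlonglongrightarrow> l c'"
        using kk(2) r(1) by (intro LIMSEQ_subseq_LIMSEQ) auto
      then show ?thesis using False by (simp add: o_def)
    qed
  qed
qed

context mdp
begin

lemma J_cont:
  assumes d: "isdist d" and vps: "\<And>m. vp n A (\<sigma> m)" and pc: "pol_conv n A \<sigma> \<pi>b"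
  shows "(\<lambda>m. Jret n A P r \<gamma> d (\<sigma> m)) \<longlonglongrightarrow> Jret n A P r \<gamma> d \<pi>b"
proof -
  have conv: "(\<lambda>m. \<sigma> m q s b) \<longlonglongrightarrow> \<pi>b q s b" if "q < n" "b \<in> A q" for q s b
    using pc that by (auto simp: pol_conv_def)
  have vpb: "vp n A \<pi>b"
    unfolding vp_def valid_agent_pol_def
  proof (intro allI impI conjI ballI)
    fix q s b assume q: "q < n" and b: "b \<in> A q"
    show "0 \<le> \<pi>b q s b"
      by (rule LIMSEQ_le_const[OF conv[OF q b]]) (use vps q b in \<open>auto simp: vp_def valid_agent_pol_def\<close>)
  next
    fix q s assume q: "q < n"
    have "(\<lambda>m. \<Sum>b\<in>A q. \<sigma> m q s b) \<longlonglongrightarrow> (\<Sum>b\<in>A q. \<pi>b q s b)"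
      using conv[OF q] by (intro tendsto_sum) auto
    moreover have "(\<lambda>m. \<Sum>b\<in>A q. \<sigma> m q s b) = (\<lambda>m. 1)"
      using vps q by (auto simp: vp_def valid_agent_pol_def)
    ultimately show "(\<Sum>b\<in>A q. \<pi>b q s b) = 1" using LIMSEQ_unique tendsto_const by metis
  qed
  have jp: "(\<lambda>m. jprob n (\<sigma> m) s a) \<longlonglongrightarrow> jprob n \<pi>b s a" if "a \<in> JA n A" for s a
    unfolding jprob_def using conv JA_mem[OF that] by (intro tendsto_prod) auto
  have Pp: "(\<lambda>m. Ppol n A P (\<sigma> m) s s') \<longlonglongrightarrow> Ppol n A P \<pi>b s s'" for s s'
    unfolding Ppol_def using jp by (intro tendsto_sum tendsto_mult_right) auto
  have rp: "(\<lambda>m. rpol n A r (\<sigma> m) s) \<longlonglongrightarrow> rpol n A r \<pi>b s" for s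
    unfolding rpol_def using jp by (intro tendsto_sum tendsto_mult_right) auto
  have sd: "(\<lambda>m. sdist (Ppol n A P (\<sigma> m)) d t s) \<longlonglongrightarrow> sdist (Ppol n A P \<pi>b) d t s" for t s
  proof (induction t arbitrary: s)
    case 0 then show ?case by simp
  next
    case (Suc t) then show ?case using Pp by (simp del: sdist.simps(1)) (intro tendsto_sum tendsto_mult; auto)
  qed
  define a where "a t m = \<gamma> ^ t * (\<Sum>s\<in>UNIV. sdist (Ppol n A P (\<sigma> m)) d t s * rpol n A r (\<sigma> m) s)" for t m
  define b where "b t = \<gamma> ^ t * (\<Sum>s\<in>UNIV. sdist (Ppol n A P \<pi>b) d t s * rpol n A r \<pi>b s)" for t
  have lim: "(\<lambda>m. a t m) \<longlonglongrightarrow> b t" for t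
    unfolding a_def b_def using sd rp by (intro tendsto_mult_left tendsto_sum tendsto_mult) auto
  have bnd: "norm (a t m) \<le> Rmax * \<gamma> ^ t" for t m
  proof -
    have "\<bar>\<Sum>s\<in>UNIV. sdist (Ppol n A P (\<sigma> m)) d t s * rpol n A r (\<sigma> m) s\<bar> \<le> Rmax"
      by (rule isdist_bound[OF isdist_sdist[OF stoch_Ppol[OF vps] d] rpol_bound[OF vps]])
    then show ?thesis unfolding a_def using g0 by (simp add: abs_mult mult.commute[of Rmax] mult_left_mono)
  qed
  have "((\<lambda>m. suminf (\<lambda>t. a t m)) \<longlongrightarrow> suminf b) sequentially"
  proof (rule conjunct2[OF conjunct2[OF tannerys_theorem[where M = "\<lambda>t. Rmax * \<gamma> ^ t"]]])
    show "\<And>k. ((\<lambda>m. a k m) \<longlongrightarrow> b k) sequentially" by (rule lim)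
    show "\<forall>\<^sub>F (k, m) in at_top \<times>\<^sub>F sequentially. norm (a k m) \<le> Rmax * \<gamma> ^ k"
      using bnd by (intro always_eventually) auto
    show "summable (\<lambda>t. Rmax * \<gamma> ^ t)" using g0 g1 by (intro summable_mult summable_geometric) auto
    show "sequentially \<noteq> bot" by simp
  qed
  then show ?thesis unfolding a_def b_def Jret_def ret_def .
qed

lemma J_cong:
  assumes "\<forall>q<n. \<pi> q = \<pi>' q"
  shows "Jret n A P r \<gamma> d \<pi> = Jret n A P r \<gamma> d \<pi>'"
proof -
  have "jprob n \<pi> = jprob n \<pi>'"
    using assms by (intro ext) (simp add: jprob_def)
  then show ?thesis unfolding Jret_def ret_def Ppol_def rpol_def by simp
qed

end


theorem corollary1:
  fixes n :: nat
    and A :: "nat \<Rightarrow> 'a set"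
    and P :: "'s::finite \<Rightarrow> (nat \<Rightarrow> 'a) \<Rightarrow> 's \<Rightarrow> real"
    and r :: "'s \<Rightarrow> (nat \<Rightarrow> 'a) \<Rightarrow> real"
    and d :: "'s \<Rightarrow> real"
    and \<gamma> Rmax :: real
    and K :: "nat \<Rightarrow> nat"
    and it :: "nat \<Rightarrow> nat \<Rightarrow> nat \<Rightarrow> 's \<Rightarrow> 'a \<Rightarrow> real"
  assumes A_fin: "\<forall>i<n. finite (A i) \<and> A i \<noteq> {}"
    and P_stoch: "\<forall>s. \<forall>a\<in>JA n A. (\<forall>s'. 0 \<le> P s a s') \<and> (\<Sum>s'\<in>UNIV. P s a s') = 1"
    and d_dist: "(\<forall>s. 0 \<le> d s) \<and> (\<Sum>s\<in>UNIV. d s) = 1"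
    and r_bound: "\<forall>s. \<forall>a\<in>JA n A. \<bar>r s a\<bar> \<le> Rmax"
    and gamma: "0 \<le> \<gamma>" "\<gamma> < 1"
    and K_pos: "\<forall>i<n. 1 \<le> K i"
    and valid: "\<forall>k. \<forall>i<n. \<forall>j\<le>K i. valid_agent_pol A i (it k i j)"
    and next_round: "\<forall>k. \<forall>i<n. it (Suc k) i 0 = it k i (K i)"
    and argmax: "\<forall>k. \<forall>i<n. \<forall>j<K i. \<forall>p. valid_agent_pol A i p \<longrightarrow>
        Fobj n A P r \<gamma> d (baseline it k i j) i p
          \<le> Fobj n A P r \<gamma> d (baseline it k i j) i (it k i (Suc j))"
  shows "(\<exists>Jbar::real. (\<lambda>k. Jret n A P r \<gamma> d (\<lambda>i. it k i 0)) \<longlonglongrightarrow> Jbar \<and>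
            (\<exists>\<pi>bar kk. strict_mono kk \<and> pol_conv n A (\<lambda>m. \<lambda>i. it (kk m) i 0) \<pi>bar) \<and>
            (\<forall>\<pi>bar kk. strict_mono kk \<and> pol_conv n A (\<lambda>m. \<lambda>i. it (kk m) i 0) \<pi>bar
                 \<longrightarrow> Jret n A P r \<gamma> d \<pi>bar = Jbar))"
proof -
  interpret mdp n A P r \<gamma> Rmax
    using A_fin P_stoch r_bound gamma by unfold_locales auto
  have d: "isdist d" using d_dist by (simp add: isdist_def)
  let ?J = "Jret n A P r \<gamma> d"
  have vpk: "vp n A (\<lambda>i. it k i 0)" for k
    using valid by (auto simp: vp_def)
  have vpB: "vp n A (baseline it k i j)" if "i < n" "j \<le> K i" for k i j
    unfolding vp_def baseline_def using valid that by auto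
  have vpB0: "vp n A (baseline it k i 0)" for k i
    unfolding vp_def baseline_def using valid by auto
  have step: "?J (baseline it k i j) \<le> ?J (baseline it k i (Suc j))" if i: "i < n" and j: "j < K i" for k i j
  proof -
    let ?B = "baseline it k i j" and ?B' = "baseline it k i (Suc j)"
    have ag: "\<forall>q. q \<noteq> i \<longrightarrow> ?B' q = ?B q" by (simp add: baseline_def)
    have Bi: "?B i = it k i j" "?B' i = it k i (Suc j)" by (simp_all add: baseline_def)
    have "0 = Fobj n A P r \<gamma> d ?B i (?B i)"
      using Fobj_self[OF i vpB[OF i] d] j by simp
    also have "\<dots> \<le> Fobj n A P r \<gamma> d ?B i (it k i (Suc j))"
      unfolding Bi using argmax valid i j by auto
    also have "\<dots> \<le> ereal (?J ?B' - ?J ?B)"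
      using one_step[OF i vpB[OF i] vpB[OF i] ag d] j unfolding Bi by simp
    finally show ?thesis by simp
  qed
  have chain_j: "?J (baseline it k i 0) \<le> ?J (baseline it k i j)" if i: "i < n" and "j \<le> K i" for k i j
    using that(2)
  proof (induction j)
    case 0 then show ?case by simp
  next
    case (Suc j)
    then show ?case using step[OF i, of j k] by simp
  qed
  have link: "baseline it k (Suc i) 0 = baseline it k i (K i)" if "i < n" for k i
    using next_round that by (intro ext) (auto simp: baseline_def)
  have chain_i: "?J (baseline it k 0 0) \<le> ?J (baseline it k i 0)" if "i \<le> n" for k i
    using that
  proof (induction i)
    case 0 then show ?case by simp
  next
    case (Suc i)
    then have i: "i < n" by simp
    have "?J (baseline it k i 0) \<le> ?J (baseline it k i (K i))" using chain_j[OF i] by simp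
    then show ?case using Suc link[OF i] by simp
  qed
  have b00: "baseline it k 0 0 = (\<lambda>i. it k i 0)" for k
    by (intro ext) (simp add: baseline_def)
  have bn0: "?J (baseline it k n 0) = ?J (\<lambda>i. it (Suc k) i 0)" for k
    by (rule J_cong) (simp add: baseline_def)
  have inc: "incseq (\<lambda>k. ?J (\<lambda>i. it k i 0))"
  proof (rule incseq_SucI)
    fix k
    show "?J (\<lambda>i. it k i 0) \<le> ?J (\<lambda>i. it (Suc k) i 0)"
      using chain_i[of n k] b00[of k] bn0[of k] by simp
  qed
  obtain Jbar where Jbar: "(\<lambda>k. ?J (\<lambda>i. it k i 0)) \<longlonglongrightarrow> Jbar"
    using incseq_convergent[OF inc, of "Rmax / (1 - \<gamma>)"] Jret_bound[OF vpk d] by blast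
  have ex: "\<exists>\<pi>bar kk. strict_mono kk \<and> pol_conv n A (\<lambda>m. \<lambda>i. it (kk m) i 0) \<pi>bar"
  proof -
    define S where "S = Sigma {..<n} (\<lambda>q. (UNIV :: 's set) \<times> A q)"
    have fS: "finite S" unfolding S_def using A_fin by (intro finite_SigmaI) auto
    have bd: "\<bar>(\<lambda>(q, s, b). it k q 0 s b) c\<bar> \<le> 1" if cS: "c \<in> S" for k c
    proof -
      obtain q s b where c: "c = (q, s, b)" "q < n" "b \<in> A q" using cS by (auto simp: S_def)
      have vq: "valid_agent_pol A q (it k q 0)" using valid c by auto
      then have "0 \<le> it k q 0 s b" using c by (auto simp: valid_agent_pol_def)
      moreover have "it k q 0 s b \<le> 1"
        using vq c A_fin member_le_sum[of b "A q" "it k q 0 s"] by (auto simp: valid_agent_pol_def)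
      ultimately show ?thesis using c by simp
    qed
    obtain kk l where kk: "strict_mono kk" "\<forall>c\<in>S. (\<lambda>m. (\<lambda>(q, s, b). it (kk m) q 0 s b) c) \<longlonglongrightarrow> l c"
      using subseq_finite[OF fS, of "\<lambda>k. \<lambda>(q, s, b). it k q 0 s b", OF bd] by blast
    have "pol_conv n A (\<lambda>m. \<lambda>i. it (kk m) i 0) (\<lambda>q s b. l (q, s, b))"
      unfolding pol_conv_def
    proof (intro allI impI ballI)
      fix q s b assume "q < n" "b \<in> A q"
      then have "(q, s, b) \<in> S" by (simp add: S_def)
      then show "(\<lambda>m. it (kk m) q 0 s b) \<longlonglongrightarrow> l (q, s, b)" using kk(2) by auto
    qed
    then show ?thesis using kk(1) by blast
  qed
  have lim: "?J \<pi>bar = Jbar" if "strict_mono kk" "pol_conv n A (\<lambda>m. \<lambda>i. it (kk m) i 0) \<pi>bar" for \<pi>bar kk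
  proof -
    have "(\<lambda>m. ?J (\<lambda>i. it (kk m) i 0)) \<longlonglongrightarrow> ?J \<pi>bar"
      by (rule J_cont[OF d vpk that(2)])
    moreover have "((\<lambda>k. ?J (\<lambda>i. it k i 0)) \<circ> kk) \<longlonglongrightarrow> Jbar"
      by (rule LIMSEQ_subseq_LIMSEQ[OF Jbar that(1)])
    ultimately show ?thesis by (simp add: o_def LIMSEQ_unique)
  qed
  show ?thesis using Jbar ex lim by blast
qed

end
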